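(* Consider a Boolean control network $\mathbf{x}(t+1)=L\ltimes\mathbf{u}(t)\ltimes\mathbf{x}(t)$, $\mathbf{y}(t)=H\mathbf{x}(t)$, $t\in\mathbb{Z}_+$, with $L\in\mathcal{L}_{N\times NM}$, $H\in\mathcal{L}_{P\times N}$, and a periodic reference output trajectory of minimal period $T\ge1$ given by $\mathbf{y}_r(s+kT)=\delta_P^{i_s}$ for $s\in[1,T]$, $k\in\mathbb{Z}_+$. The following are equivalent: (i) the periodic trajectory is trackable from every $\mathbf{x}_0\in\mathcal{L}_N$, i.e. for every $\mathbf{x}_0$ there is an infinite input sequence $\{\mathbf{u}(t)\}_{t\in\mathbb{Z}_+}\subset\mathcal{L}_M$ such that the resulting state trajectory with $\mathbf{x}(0)=\mathbf{x}_0$ satisfies $H\mathbf{x}(t)=\mathbf{y}_r(t)$ for all $t\ge1$; (ii) the finite-length trajectory $\{\mathbf{y}_r(t)\}_{t=1}^T$ is trackable from every $\mathbf{x}_0\in\mathcal{L}_N$, i.e. for every $\mathbf{x}_0$ there are inputs $\mathbf{u}(0),\dots,\mathbf{u}(T-1)\in\mathcal{L}_M$ such that $H\mathbf{x}(t)=\mathbf{y}_r(t)$ for all $t\in[1,T]$.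
   Context: $\delta_k^i$ is the $i$-th canonical vector of $\mathbb{R}^k$; $\mathcal{L}_k$ is the set of canonical vectors of $\mathbb{R}^k$; $\mathcal{L}_{k\times q}$ the set of $k\times q$ matrices whose columns are in $\mathcal{L}_k$. $N=2^n$, $M=2^m$, $P=2^p$. Writing $L=[L_1|\cdots|L_M]$ with $L_i\in\mathcal{L}_{N\times N}$, one has $L\ltimes\delta_M^i\ltimes\mathbf{x}=L_i\mathbf{x}$ for $\mathbf{x}\in\mathcal{L}_N$. *)

theory Defs
  imports "Jordan_Normal_Form.Matrix"
begin

text \<open>Canonical vector delta_k^i (1-based index i), as a k x 1 column matrix.\<close>
definition delta :: "nat \<Rightarrow> nat \<Rightarrow> real mat" where
  "delta k i = mat k 1 (\<lambda>(r, c). if r = i - 1 then 1 else 0)"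

definition canon :: "nat \<Rightarrow> real mat set" where
  "canon k = {delta k i | i. 1 \<le> i \<and> i \<le> k}"

definition logical_mat :: "nat \<Rightarrow> nat \<Rightarrow> real mat set" where
  "logical_mat k q = {A. A \<in> carrier_mat k q \<and>
     (\<forall>j<q. mat k 1 (\<lambda>(r, c). A $$ (r, j)) \<in> canon k)}"

definition kron :: "real mat \<Rightarrow> real mat \<Rightarrow> real mat" where
  "kron A B = mat (dim_row A * dim_row B) (dim_col A * dim_col B)
     (\<lambda>(i, j). A $$ (i div dim_row B, j div dim_col B) * B $$ (i mod dim_row B, j mod dim_col B))"

definition stp :: "real mat \<Rightarrow> real mat \<Rightarrow> real mat" (infixl "\<ltimes>" 70) where
  "stp A B = (let a = lcm (dim_col A) (dim_row B) in
     kron A (1\<^sub>m (a div dim_col A)) * kron B (1\<^sub>m (a div dim_row B)))"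

fun traj :: "real mat \<Rightarrow> (nat \<Rightarrow> real mat) \<Rightarrow> real mat \<Rightarrow> nat \<Rightarrow> real mat" where
  "traj L u x0 0 = x0"
| "traj L u x0 (Suc t) = L \<ltimes> u t \<ltimes> traj L u x0 t"

definition yref :: "nat \<Rightarrow> nat \<Rightarrow> (nat \<Rightarrow> nat) \<Rightarrow> nat \<Rightarrow> real mat" where
  "yref P T idx t = delta P (idx ((t - 1) mod T + 1))"

end

theory Submission
  imports Defs
begin


lemma kron_one1: "kron A (1\<^sub>m 1) = A"
  by (rule eq_matI) (auto simp: kron_def)

lemma kron_one1': "kron A (1\<^sub>m (Suc 0)) = A"
  using kron_one1 by simp

lemma stp_sq: assumes "A \<in> carrier_mat N N" "x \<in> carrier_mat N 1" "N > 0"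
  shows "A \<ltimes> x = A * x"
  using assms by (simp add: stp_def kron_one1 kron_one1')

lemma dm: "s < (T::nat) \<Longrightarrow> (q*T + s) div T = q \<and> (q*T+s) mod T = s"
  by simp

lemma lt_aux: "(a::nat) < M \<Longrightarrow> j < N \<Longrightarrow> a*N+j < M*N"
proof -
  assume a: "a < M" and j: "j < N"
  have "a*N+j < (a+1)*N" using j by simp
  also have "(a+1)*N \<le> M*N" using a by (intro mult_le_mono1) simp
  finally show ?thesis .
qed

lemma stp_Lu:
  assumes L: "L \<in> carrier_mat N (N*M)" and N: "N > 0" and M: "M > 0" and a: "a < M"
  shows "L \<ltimes> delta M (a+1) = mat N N (\<lambda>(r,j). L $$ (r, a*N+j))"
proof -
  have lc: "lcm (N*M) M = N*M" by (simp add: lcm_proj1_if_dvd)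
  have e: "L \<ltimes> delta M (a+1) = L * kron (delta M (a+1)) (1\<^sub>m N)"
    using L M N lc by (simp add: stp_def kron_one1 kron_one1' delta_def Let_def)
  show ?thesis
  proof (rule eq_matI)
    fix r j assume r: "r < dim_row (mat N N (\<lambda>(r,j). L $$ (r, a*N+j)))"
      and j: "j < dim_col (mat N N (\<lambda>(r,j). L $$ (r, a*N+j)))"
    have rN: "r < N" and jN: "j < N" using r j by auto
    have "(L * kron (delta M (a+1)) (1\<^sub>m N)) $$ (r,j)
        = (\<Sum>i\<in>{0..<M*N}. L $$ (r,i) * ((if i div N = a then 1 else 0) * (if i mod N = j then 1 else 0)))"
    proof -
      have k: "kron (delta M (a+1)) (1\<^sub>m N) $$ (i,j) = (if i div N = a then 1 else 0) * (if i mod N = j then 1 else 0)"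
        if "i < M*N" for i
      proof -
        have "i div N < M" using that by (simp add: less_mult_imp_div_less)
        then show ?thesis using that jN N by (simp add: kron_def delta_def)
      qed
      have dims: "dim_row (kron (delta M (a+1)) (1\<^sub>m N)) = M*N" "dim_col (kron (delta M (a+1)) (1\<^sub>m N)) = N"
        by (simp_all add: kron_def delta_def)
      have dcL: "dim_col L = M*N" "dim_row L = N" using L by auto
      show ?thesis
        using dcL rN jN N dims k by (auto simp: scalar_prod_def intro!: sum.cong)
    qed
    also have "\<dots> = (\<Sum>i\<in>{0..<M*N}. if i = a*N+j then L $$ (r,i) else 0)"
    proof (rule sum.cong[OF refl])
      fix i
      have "(i div N = a \<and> i mod N = j) = (i = a*N+j)"
        using jN N by (metis add.commute div_mult_self1 div_less mod_less mod_mult_self1 mult.commute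
             not_gr0 div_mult_mod_eq add.right_neutral)
      then show "L $$ (r,i) * ((if i div N = a then 1 else 0) * (if i mod N = j then 1 else 0))
          = (if i = a*N+j then L $$ (r,i) else 0)" by auto
    qed
    also have "\<dots> = L $$ (r, a*N+j)"
    proof -
      have "a*N+j < M*N" by (rule lt_aux[OF a jN])
      then show ?thesis by simp
    qed
    finally show "(L \<ltimes> delta M (a+1)) $$ (r,j) = mat N N (\<lambda>(r,j). L $$ (r, a*N+j)) $$ (r,j)"
      using e rN jN by simp
  qed (use e L in \<open>auto simp: kron_def delta_def\<close>)
qed


lemma step_canon:
  assumes L: "L \<in> logical_mat N (N*M)" and u: "u \<in> canon M" and x: "x \<in> canon N"
  shows "L \<ltimes> u \<ltimes> x \<in> canon N"
proof -
  obtain a where a: "1 \<le> a" "a \<le> M" "u = delta M a" using u by (auto simp: canon_def)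
  obtain b where b: "1 \<le> b" "b \<le> N" "x = delta N b" using x by (auto simp: canon_def)
  have N: "N > 0" and M: "M > 0" using a b by auto
  have Lc: "L \<in> carrier_mat N (N*M)" using L by (simp add: logical_mat_def)
  have ua: "u = delta M ((a-1)+1)" using a by simp
  have xb: "x = delta N ((b-1)+1)" using b by simp
  define A where "A = mat N N (\<lambda>(r,j). L $$ (r, (a-1)*N+j))"
  have 1: "L \<ltimes> u = A" unfolding A_def ua by (rule stp_Lu[OF Lc N M]) (use a in auto)
  have xc: "x \<in> carrier_mat N 1" using b by (simp add: delta_def)
  have 2: "A \<ltimes> x = A * x" by (rule stp_sq) (use xc N in \<open>auto simp: A_def\<close>)
  have col: "(a-1)*N+(b-1) < N*M"
  proof -
    have "(a-1)*N+(b-1) < (a-1)*N + N" using b by auto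
    also have "\<dots> = a*N" using a by (cases a) auto
    also have "\<dots> \<le> M*N" using a by simp
    finally show ?thesis by (simp add: mult.commute)
  qed
  have 3: "A * x = mat N 1 (\<lambda>(r, c). L $$ (r, (a-1)*N+(b-1)))"
  proof (rule eq_matI)
    fix r j assume r: "r < dim_row (mat N 1 (\<lambda>(r, c). L $$ (r, (a-1)*N+(b-1))))"
      and j: "j < dim_col (mat N 1 (\<lambda>(r, c). L $$ (r, (a-1)*N+(b-1))))"
    have "(A * x) $$ (r,j) = (\<Sum>i\<in>{0..<N}. L $$ (r, (a-1)*N+i) * (if i = b-1 then 1 else 0))"
      using r j xc unfolding xb by (auto simp: A_def delta_def scalar_prod_def intro!: sum.cong)
    also have "\<dots> = (\<Sum>i\<in>{0..<N}. if i = b-1 then L $$ (r, (a-1)*N+i) else 0)"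
      by (rule sum.cong) auto
    also have "\<dots> = L $$ (r, (a-1)*N+(b-1))" using b by simp
    finally show "(A * x) $$ (r,j) = mat N 1 (\<lambda>(r, c). L $$ (r, (a-1)*N+(b-1))) $$ (r,j)"
      using r j by simp
  qed (use xc in \<open>auto simp: A_def\<close>)
  have "mat N 1 (\<lambda>(r, c). L $$ (r, (a-1)*N+(b-1))) \<in> canon N"
    using L col by (auto simp: logical_mat_def)
  then show ?thesis using 1 2 3 by simp
qed

lemma traj_canon:
  assumes L: "L \<in> logical_mat N (N*M)" and x0: "x0 \<in> canon N"
    and u: "\<forall>t<T. u t \<in> canon M"
  shows "s \<le> T \<Longrightarrow> traj L u x0 s \<in> canon N"
  by (induction s) (use assms step_canon in auto)

theorem proposition1:
  fixes n m p T :: nat and L H :: "real mat" and idx :: "nat \<Rightarrow> nat"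
  assumes "L \<in> logical_mat (2^n) (2^n * 2^m)"
    and "H \<in> logical_mat (2^p) (2^n)"
    and "T \<ge> 1"
    and "\<forall>s\<in>{1..T}. 1 \<le> idx s \<and> idx s \<le> 2^p"
    and "\<forall>T'. 1 \<le> T' \<and> T' < T \<longrightarrow>
           \<not> (\<forall>t\<ge>1. yref (2^p) T idx (t + T') = yref (2^p) T idx t)"
  shows "(\<forall>x0\<in>canon (2^n). \<exists>u. (\<forall>t. u t \<in> canon (2^m)) \<and>
            (\<forall>t\<ge>1. H * traj L u x0 t = yref (2^p) T idx t))
     \<longleftrightarrow> (\<forall>x0\<in>canon (2^n). \<exists>u. (\<forall>t<T. u t \<in> canon (2^m)) \<and>
            (\<forall>t\<in>{1..T}. H * traj L u x0 t = yref (2^p) T idx t))"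
  proof
  assume A: "\<forall>x0\<in>canon (2^n). \<exists>u. (\<forall>t. u t \<in> canon (2^m)) \<and>
            (\<forall>t\<ge>1. H * traj L u x0 t = yref (2^p) T idx t)"
  show "\<forall>x0\<in>canon (2^n). \<exists>u. (\<forall>t<T. u t \<in> canon (2^m)) \<and>
            (\<forall>t\<in>{1..T}. H * traj L u x0 t = yref (2^p) T idx t)"
  proof
    fix x0 assume "x0 \<in> canon (2^n)"
    then obtain u where "\<forall>t. u t \<in> canon (2^m)" "\<forall>t\<ge>1. H * traj L u x0 t = yref (2^p) T idx t"
      using A by blast
    then show "\<exists>u. (\<forall>t<T. u t \<in> canon (2^m)) \<and>
            (\<forall>t\<in>{1..T}. H * traj L u x0 t = yref (2^p) T idx t)"
      by (intro exI[of _ u]) auto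
  qed
next
  assume B: "\<forall>x0\<in>canon (2^n). \<exists>u. (\<forall>t<T. u t \<in> canon (2^m)) \<and>
            (\<forall>t\<in>{1..T}. H * traj L u x0 t = yref (2^p) T idx t)"
  then obtain U where U: "\<And>x0. x0 \<in> canon (2^n) \<Longrightarrow> (\<forall>t<T. U x0 t \<in> canon (2^m)) \<and>
            (\<forall>t\<in>{1..T}. H * traj L (U x0) x0 t = yref (2^p) T idx t)"
    by metis
  have T: "T > 0" using assms(3) by simp
  show "\<forall>x0\<in>canon (2^n). \<exists>u. (\<forall>t. u t \<in> canon (2^m)) \<and>
            (\<forall>t\<ge>1. H * traj L u x0 t = yref (2^p) T idx t)"
  proof
    fix x0 assume x0: "x0 \<in> canon (2^n)"
    define z where "z = rec_nat x0 (\<lambda>_ y. traj L (U y) y T)"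
    have z0: "z 0 = x0" and zS: "\<And>k. z (Suc k) = traj L (U (z k)) (z k) T" by (simp_all add: z_def)
    have zc: "z k \<in> canon (2^n)" for k
    proof (induction k)
      case 0 then show ?case using x0 z0 by simp
    next
      case (Suc k)
      have "\<forall>t<T. U (z k) t \<in> canon (2^m)" using U[OF Suc] by blast
      from traj_canon[OF assms(1) Suc this] show ?case unfolding zS by simp
    qed
    define u where "u t = U (z (t div T)) (t mod T)" for t
    have blk: "s \<le> T \<Longrightarrow> traj L u x0 (k*T+s) = traj L (U (z k)) (z k) s" for k s
    proof (induction k arbitrary: s)
      case 0
      then show ?case
      proof (induction s)
        case 0 then show ?case using z0 by simp
      next
        case (Suc s)
        have "u s = U (z 0) s" using Suc T by (simp add: u_def)
        then show ?case using Suc by simp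
      qed
    next
      case (Suc k)
      have base: "traj L u x0 (Suc k * T) = z (Suc k)"
        using Suc.IH[of T] zS by (simp add: add.commute)
      from Suc.prems show ?case
      proof (induction s)
        case 0 then show ?case using base by simp
      next
        case (Suc s)
        have "(Suc k * T + s) div T = Suc k" "(Suc k * T + s) mod T = s"
          using dm[of s T "Suc k"] Suc by simp_all
        then have "u (Suc k * T + s) = U (z (Suc k)) s" by (simp add: u_def)
        then show ?case using Suc by simp
      qed
    qed
    show "\<exists>u. (\<forall>t. u t \<in> canon (2^m)) \<and>
            (\<forall>t\<ge>1. H * traj L u x0 t = yref (2^p) T idx t)"
    proof (intro exI conjI allI impI)
      fix t show "u t \<in> canon (2^m)" using U[OF zc] T by (simp add: u_def)
    next
      fix t :: nat assume t: "t \<ge> 1"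
      define k where "k = (t-1) div T"
      define s where "s = (t-1) mod T + 1"
      have ts: "t = k*T + s" using t by (simp add: k_def s_def)
      have s: "s \<in> {1..T}" using T by (simp add: s_def Suc_leI)
      have "H * traj L u x0 t = H * traj L (U (z k)) (z k) s" using blk s ts by simp
      also have "\<dots> = yref (2^p) T idx s" using U[OF zc] s by blast
      also have "\<dots> = yref (2^p) T idx t" using s T by (simp add: yref_def s_def)
      finally show "H * traj L u x0 t = yref (2^p) T idx t" .
    qed
  qed
qed

end
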